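(* Let $p$ be a prime, $w\ge1$, and $\mu>0$ a real number with $2^\mu$ an integer; let $c_\mu=\frac{2^\mu\sin(\pi/2^\mu)}{p\sin(\pi/p)}$. For any sets $A_1,\dots,A_{2^\mu}\subseteq\mathbb{F}_{p^w}$ with $\sum_{i=1}^{2^\mu}|A_i|=p^w$, \[ \sum_{i=1}^{2^\mu}\max_{\alpha\in\mathbb{F}_{p^w}\setminus\{0\}}\left|\widehat{\mathbb 1_{A_i}}(\alpha)\right|\le c_\mu . \]
   Context: For $A\subseteq\mathbb{F}_{p^w}$, $\mathbb 1_A$ is its characteristic function. $\mathrm{Tr}$ is the trace $\mathbb{F}_{p^w}\to\mathbb{F}_p$ (values in $\{0,\dots,p-1\}$), $\omega_p=e^{2\pi\mathbf i/p}$, and $\hat f(\alpha)=p^{-w}\sum_{x\in\mathbb{F}_{p^w}}f(x)\omega_p^{\mathrm{Tr}(\alpha x)}$. *)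

theory Defs
  imports "HOL-Analysis.Analysis"
begin

text \<open>The field F_{p^w} is modelled by an arbitrary finite field type 'a with
  CARD('a) = p^w (p prime). The absolute trace F_{p^w} -> F_p is
  Tr(x) = x + x^p + ... + x^(p^(w-1)); its value lies in the prime field,
  i.e. equals of_nat k for a unique k < p, which we take as the value in {0..p-1}.\<close>

definition field_trace :: "nat \<Rightarrow> nat \<Rightarrow> 'a::field \<Rightarrow> 'a" where
  "field_trace p w x = (\<Sum>i<w. x ^ (p ^ i))"

definition trace_nat :: "nat \<Rightarrow> nat \<Rightarrow> 'a::field \<Rightarrow> nat" where
  "trace_nat p w x = (THE k. k < p \<and> of_nat k = field_trace p w x)"

definition omega :: "nat \<Rightarrow> complex" where
  "omega p = exp (2 * pi * \<i> / of_nat p)"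

definition indicator_fn :: "'a set \<Rightarrow> 'a \<Rightarrow> complex" where
  "indicator_fn A x = (if x \<in> A then 1 else 0)"

definition fourier :: "nat \<Rightarrow> nat \<Rightarrow> ('a::{field,finite} \<Rightarrow> complex) \<Rightarrow> 'a \<Rightarrow> complex" where
  "fourier p w f \<alpha> = (1 / of_nat (p ^ w)) *
      (\<Sum>x\<in>(UNIV::'a set). f x * omega p ^ trace_nat p w (\<alpha> * x))"

end

theory Submission
  imports Defs "HOL-Number_Theory.Residues" "HOL-Computational_Algebra.Polynomial"
begin

lemma char_eq_p:
  assumes "prime p" "w \<ge> 1" "CARD('a::{field,finite}) = p ^ w"
  shows "CHAR('a) = p"
proof -
  have pos: "CHAR('a) > 0" by (simp add: finite_imp_CHAR_pos)
  have pr: "prime CHAR('a)" using pos prime_CHAR_semidom by blast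
  have "CHAR('a) dvd p ^ w" using CHAR_dvd_CARD[where 'a='a] assms(3) by simp
  hence "CHAR('a) dvd p" using pr prime_dvd_power by blast
  thus ?thesis using pr assms(1) by (simp add: primes_dvd_imp_eq)
qed

lemma field_pow_card:
  fixes x :: "'a::{field,finite}"
  shows "x ^ CARD('a) = x"
proof (cases "x = 0")
  case False
  have "x * (\<Prod>y\<in>UNIV-{0}. x * y) = x * x ^ (card (UNIV :: 'a set) - 1) * \<Prod>(UNIV-{0})"
    by (simp add: prod.distrib mult_ac)
  also have "x * x ^ (card (UNIV :: 'a set) - 1) = x ^ Suc (card (UNIV :: 'a set) - 1)"
    by (subst power_Suc) auto
  also have "Suc (card (UNIV :: 'a set) - 1) = card (UNIV :: 'a set)"
    using finite_UNIV_card_ge_0[where ?'a = 'a] by simp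
  also have "(\<Prod>y\<in>UNIV-{0}. x * y) = (\<Prod>y\<in>UNIV-{0}. y)"
    by (rule prod.reindex_bij_witness[of _ "\<lambda>y. y / x" "\<lambda>y. x * y"]) (use False in auto)
  finally show ?thesis
    by simp
qed (use finite_UNIV_card_ge_0[where ?'a = 'a] in auto)

locale ff =
  fixes p w :: nat and ty :: "'a::{field,finite} itself"
  assumes p: "prime p" and w: "w \<ge> 1" and card: "CARD('a) = p ^ w"
begin

lemma CHAR: "CHAR('a) = p" using char_eq_p p w card by blast

lemma p2: "p \<ge> 2" using p prime_ge_2_nat by blast

lemma frob: "((x::'a) + y) ^ (p ^ i) = x ^ (p ^ i) + y ^ (p ^ i)"
  by (rule freshmans_dream') (auto simp: CHAR p)

lemma frob_diff: "((x::'a) - y) ^ (p ^ i) = x ^ (p ^ i) - y ^ (p ^ i)"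
  using frob[of "x - y" y i] by (simp add: algebra_simps)

lemma tr_add: "field_trace p w ((x::'a) + y) = field_trace p w x + field_trace p w y"
  by (simp add: field_trace_def frob sum.distrib)

lemma tr_diff: "field_trace p w ((x::'a) - y) = field_trace p w x - field_trace p w y"
  by (simp add: field_trace_def frob_diff sum_subtractf)

lemma pow_pw: "(x::'a) ^ (p ^ w) = x" using field_pow_card[of x] card by simp

lemma tr_pow: "field_trace p w (x::'a) ^ p = field_trace p w x"
proof -
  have "field_trace p w x ^ p = (\<Sum>i<w. (x ^ (p ^ i)) ^ p)"
    unfolding field_trace_def by (rule freshmans_dream_sum) (auto simp: CHAR p)
  also have "\<dots> = (\<Sum>i<w. x ^ (p ^ Suc i))"
    by (simp add: power_mult[symmetric] mult.commute)
  also have "\<dots> = (\<Sum>i<Suc w. x ^ (p ^ i)) - x"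
    by (subst sum.lessThan_Suc_shift) simp
  also have "\<dots> = (\<Sum>i<w. x ^ (p ^ i))"
    by (simp add: pow_pw)
  finally show ?thesis unfolding field_trace_def .
qed

lemma ofnat_pow: "(of_nat k :: 'a) ^ p = of_nat k"
proof (induction k)
  case 0 then show ?case using p2 by simp
next
  case (Suc k)
  have "(of_nat (Suc k) :: 'a) ^ p = (of_nat k + 1) ^ p" by (simp add: add.commute)
  also have "\<dots> = of_nat k ^ p + 1" using frob[of "of_nat k" 1 1] by simp
  finally have "(of_nat (Suc k) :: 'a) ^ p = of_nat k ^ p + 1" .
  thus ?case using Suc by simp
qed

lemma ofnat_inj: "j < p \<Longrightarrow> k < p \<Longrightarrow> (of_nat j :: 'a) = of_nat k \<Longrightarrow> j = k"
  by (simp add: of_nat_eq_iff_cong_CHAR CHAR cong_less_modulus_unique_nat)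

lemma roots_sub: "{y::'a. y ^ p = y} \<subseteq> of_nat ` {..<p}"
proof -
  define P :: "'a poly" where "P = Polynomial.monom 1 p - Polynomial.monom 1 1"
  have degP: "degree P \<le> p" using p2 unfolding P_def
    by (intro degree_diff_le) (auto intro: order_trans[OF degree_monom_le])
  have "Polynomial.coeff P p = 1" using p2 by (simp add: P_def coeff_monom)
  hence P0: "P \<noteq> 0" by auto
  have eq: "{y::'a. y ^ p = y} = {x. poly P x = 0}"
    by (auto simp: P_def poly_monom)
  have "card {y::'a. y ^ p = y} \<le> p" using card_poly_roots_bound[OF P0] degP eq by simp
  moreover have sub: "of_nat ` {..<p} \<subseteq> {y::'a. y ^ p = y}" using ofnat_pow by auto
  moreover have "card (of_nat ` {..<p} :: 'a set) = p"
    by (subst card_image) (auto intro!: inj_onI dest: ofnat_inj)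
  moreover have "card (of_nat ` {..<p} :: 'a set) \<le> card {y::'a. y ^ p = y}"
    using sub by (intro card_mono) auto
  ultimately have "of_nat ` {..<p} = {y::'a. y ^ p = y}"
    by (intro card_subset_eq) auto
  thus ?thesis by simp
qed

lemma trace_nat_props: "trace_nat p w (x::'a) < p \<and> of_nat (trace_nat p w x) = field_trace p w x"
proof -
  have "field_trace p w x \<in> of_nat ` {..<p}"
    using subsetD[OF roots_sub, of "field_trace p w x"] tr_pow[of x] by simp
  then obtain k where k: "k < p" "of_nat k = field_trace p w x" by auto
  have "\<exists>!k. k < p \<and> of_nat k = field_trace p w x"
  proof (rule ex1I[of _ k])
    show "k < p \<and> of_nat k = field_trace p w x" using k by simp
    fix j assume "j < p \<and> (of_nat j::'a) = field_trace p w x"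
    thus "j = k" using k ofnat_inj[of j k] by simp
  qed
  thus ?thesis unfolding trace_nat_def by (rule theI')
qed

lemma kernel_card:
  assumes "(\<alpha>::'a) \<noteq> 0"
  shows "card {x::'a. field_trace p w (\<alpha> * x) = 0} \<le> p ^ (w - 1)"
proof -
  define Q :: "'a poly" where "Q = (\<Sum>i<w. Polynomial.monom (\<alpha> ^ (p ^ i)) (p ^ i))"
  have "poly Q x = field_trace p w (\<alpha> * x)" for x
    by (simp add: Q_def field_trace_def poly_sum poly_monom power_mult_distrib)
  hence eq: "{x::'a. field_trace p w (\<alpha> * x) = 0} = {x. poly Q x = 0}" by simp
  have inj: "p ^ i = p ^ j \<longleftrightarrow> i = j" for i j using p2 by (simp add: power_inject_exp)
  have "Polynomial.coeff Q (p ^ (w - 1)) = (\<Sum>i<w. if p ^ i = p ^ (w-1) then \<alpha> ^ (p ^ i) else 0)"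
    by (simp add: Q_def coeff_sum coeff_monom)
  also have "\<dots> = (\<Sum>i\<in>{w-1}. \<alpha> ^ (p ^ i))"
    using w by (intro sum.mono_neutral_cong_right) (auto simp: inj)
  finally have "Polynomial.coeff Q (p ^ (w - 1)) \<noteq> 0" using assms by simp
  hence Q0: "Q \<noteq> 0" by auto
  have "\<forall>i\<in>{..<w}. degree (Polynomial.monom (\<alpha> ^ (p ^ i)) (p ^ i)) \<le> p ^ (w - 1)"
  proof
    fix i assume "i \<in> {..<w}"
    hence "p ^ i \<le> p ^ (w - 1)" using p2 by (intro power_increasing) auto
    thus "degree (Polynomial.monom (\<alpha> ^ (p ^ i)) (p ^ i)) \<le> p ^ (w - 1)"
      by (meson degree_monom_le order_trans)
  qed
  hence "degree Q \<le> p ^ (w - 1)" unfolding Q_def by (intro degree_sum_le) auto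
  thus ?thesis using card_poly_roots_bound[OF Q0] eq by simp
qed

lemma fiber_card:
  assumes "(\<alpha>::'a) \<noteq> 0"
  shows "card {x::'a. trace_nat p w (\<alpha> * x) = j} \<le> p ^ (w - 1)"
proof (cases "{x::'a. trace_nat p w (\<alpha> * x) = j} = {}")
  case True then show ?thesis by simp
next
  case False
  then obtain x0 where x0: "trace_nat p w (\<alpha> * x0) = j" by auto
  have "inj_on (\<lambda>x. x - x0) {x::'a. trace_nat p w (\<alpha> * x) = j}" by (auto intro: inj_onI)
  moreover have "(\<lambda>x. x - x0) ` {x::'a. trace_nat p w (\<alpha> * x) = j} \<subseteq> {x::'a. field_trace p w (\<alpha> * x) = 0}"
  proof (rule image_subsetI)
    fix x assume "x \<in> {x::'a. trace_nat p w (\<alpha> * x) = j}"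
    hence "trace_nat p w (\<alpha> * x) = j" by simp
    hence "field_trace p w (\<alpha> * x) = field_trace p w (\<alpha> * x0)"
      using trace_nat_props[of "\<alpha> * x"] trace_nat_props[of "\<alpha> * x0"] x0 by metis
    thus "x - x0 \<in> {x::'a. field_trace p w (\<alpha> * x) = 0}" by (simp add: right_diff_distrib tr_diff)
  qed
  ultimately have "card {x::'a. trace_nat p w (\<alpha> * x) = j} \<le> card {x::'a. field_trace p w (\<alpha> * x) = 0}"
    by (metis card_image card_mono finite)
  thus ?thesis using kernel_card[OF assms] by linarith
qed

end


lemma cmod_cis_minus1:
  assumes "0 \<le> x" "x \<le> 2 * pi"
  shows "cmod (cis x - 1) = 2 * sin (x / 2)"
proof -
  have c: "cos x = 1 - 2 * (sin (x/2))^2"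
    using cos_double[of "x/2"] sin_cos_squared_add[of "x/2"] by simp
  have "(cmod (cis x - 1))^2 = (cos x - 1)^2 + (sin x)^2"
    by (simp add: cmod_def)
  also have "\<dots> = 2 - 2 * cos x"
    using sin_cos_squared_add[of x] by (simp add: power2_eq_square algebra_simps)
  also have "\<dots> = (2 * sin (x/2))^2" by (simp add: c power2_eq_square)
  finally have "(cmod (cis x - 1))^2 = (2 * sin (x/2))^2" .
  moreover have "sin (x/2) \<ge> 0" using assms by (intro sin_ge_zero) auto
  ultimately show ?thesis
    by (metis norm_ge_zero power2_eq_iff_nonneg mult_nonneg_nonneg zero_le_numeral)
qed

lemma omega_pow: "omega p ^ j = cis (real j * (2 * pi / real p))"
proof -
  have "omega p = cis (2 * pi / real p)"
    by (simp add: omega_def cis_conv_exp mult.commute)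
  thus ?thesis by (simp add: Complex.DeMoivre)
qed

lemma arc_bound:
  assumes "p \<ge> 2" "r \<le> p"
  shows "cmod (\<Sum>j<r. cis (real j * (2 * pi / real p))) = sin (pi * real r / real p) / sin (pi / real p)"
proof -
  define h where "h = 2 * pi / real p"
  have hpos: "h > 0" using assms unfolding h_def by simp
  have tel: "(cis h - 1) * (\<Sum>j<r. cis (real j * h)) = cis (real r * h) - 1"
  proof -
    have "(cis h - 1) * (\<Sum>j<r. cis (real j * h)) = (\<Sum>j<r. cis (real (Suc j) * h) - cis (real j * h))"
      by (simp add: sum_distrib_left algebra_simps cis_mult)
    also have "\<dots> = cis (real r * h) - 1" by (subst sum_lessThan_telescope) simp
    finally show ?thesis .
  qed
  have rh: "real r * h \<le> 2 * pi" using assms unfolding h_def by (simp add: field_simps)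
  have "cmod (cis h - 1) * cmod (\<Sum>j<r. cis (real j * h)) = cmod (cis (real r * h) - 1)"
    using tel by (metis norm_mult)
  hence eq: "2 * sin (h/2) * cmod (\<Sum>j<r. cis (real j * h)) = 2 * sin (real r * h / 2)"
    using cmod_cis_minus1[of h] cmod_cis_minus1[of "real r * h"] hpos rh assms
    by (simp add: h_def field_simps)
  have "sin (h/2) > 0" using assms unfolding h_def by (intro sin_gt_zero) (auto simp: field_simps)
  hence "cmod (\<Sum>j<r. cis (real j * h)) = sin (real r * h / 2) / sin (h/2)"
    using eq by (simp add: field_simps)
  thus ?thesis unfolding h_def by (simp add: field_simps)
qed

lemma cos_shift_int: "cos (x + 2 * pi * of_int n) = cos x"
  by (simp add: cos_add)

lemma subset_bound:
  assumes p: "p \<ge> 2" and T: "T \<subseteq> {..<p}"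
  shows "cmod (\<Sum>j\<in>T. omega p ^ j) \<le> sin (pi * real (card T) / real p) / sin (pi / real p)"
proof -
  define r where "r = card T"
  define h where "h = 2 * pi / real p"
  have hpos: "h > 0" using p unfolding h_def by simp
  have rp: "r \<le> p" unfolding r_def using T by (metis card_lessThan card_mono finite_lessThan)
  have ph: "real p * h = 2 * pi" using p unfolding h_def by simp
  have pi_eq: "pi = real p * h / 2" using ph by simp
  have rhpi: "real r * h / 2 \<le> pi" using rp p unfolding h_def by (simp add: field_simps)
  have rhs_nonneg: "sin (pi * real r / real p) / sin (pi / real p) \<ge> 0"
    using rp p by (intro divide_nonneg_nonneg sin_ge_zero) (auto simp: field_simps)
  define z where "z = (\<Sum>j\<in>T. cis (real j * h))"
  have zeq: "(\<Sum>j\<in>T. omega p ^ j) = z" unfolding z_def h_def by (simp add: omega_pow)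
  define \<theta>0 where "\<theta>0 = Arg z"
  have zpol: "z = complex_of_real (cmod z) * cis \<theta>0"
    unfolding \<theta>0_def using rcis_cmod_Arg[of z] by (simp add: rcis_def)
  have "cis (- \<theta>0) * z = complex_of_real (cmod z) * (cis (- \<theta>0) * cis \<theta>0)"
    by (subst zpol) (simp only: mult.left_commute)
  also have "cis (- \<theta>0) * cis \<theta>0 = 1" by (simp add: cis_mult)
  finally have "cmod z = Re (cis (- \<theta>0) * z)" by simp
  also have "\<dots> = (\<Sum>j\<in>T. cos (real j * h - \<theta>0))"
    by (simp add: z_def sum_distrib_left cis_mult Re_sum)
  finally have z1: "cmod z = (\<Sum>j\<in>T. cos (real j * h - \<theta>0))" .
  define s :: int where "s = \<lceil>((real r - 2) * h / 2 - \<theta>0) / h\<rceil>"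
  define \<theta>1 where "\<theta>1 = \<theta>0 + real_of_int s * h"
  have s1: "((real r - 2) * h / 2 - \<theta>0) / h \<le> real_of_int s" unfolding s_def by linarith
  have s2: "real_of_int s < ((real r - 2) * h / 2 - \<theta>0) / h + 1" unfolding s_def by linarith
  have s1': "(real r - 2) * h / 2 - \<theta>0 \<le> real_of_int s * h"
    using s1 hpos by (simp add: pos_divide_le_eq)
  have s2': "real_of_int s - 1 < ((real r - 2) * h / 2 - \<theta>0) / h" using s2 by linarith
  hence s2'': "(real_of_int s - 1) * h < (real r - 2) * h / 2 - \<theta>0"
    using hpos by (simp add: pos_less_divide_eq)
  have th1a: "(real r - 2) * h / 2 \<le> \<theta>1"
    using s1' unfolding \<theta>1_def by linarith
  have th1b: "\<theta>1 < real r * h / 2"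
    using s2'' unfolding \<theta>1_def by (simp add: algebra_simps)
  define \<sigma> where "\<sigma> = nat (s mod int p)"
  have \<sigma>: "int \<sigma> = s mod int p" unfolding \<sigma>_def using p by simp
  define \<pi>' where "\<pi>' = (\<lambda>j. (j + \<sigma>) mod p)"
  define c where "c = (\<lambda>k::nat. cos (real k * h - \<theta>1))"
  have cshift: "cos (real j * h - \<theta>0) = c (\<pi>' j)" for j
  proof -
    define t where "t = (j + \<sigma>) div p"
    have "int (\<pi>' j) = int j + int \<sigma> - int p * int t"
      unfolding \<pi>'_def t_def by (simp add: of_nat_mod of_nat_div mod_div_mult_eq minus_div_mult_eq_mod [symmetric])
    also have "\<dots> = int j + s - int p * (s div int p) - int p * int t"
      using \<sigma> by (simp add: minus_div_mult_eq_mod [symmetric] algebra_simps)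
    finally have e: "real (\<pi>' j) = real j + real_of_int s - real p * real_of_int (s div int p + int t)"
      by (metis (mono_tags, opaque_lifting) of_int_add of_int_diff of_int_mult of_int_of_nat_eq
          distrib_left add_diff_eq diff_diff_eq)
    have "real (\<pi>' j) * h - \<theta>1 = (real j * h - \<theta>0) + 2 * pi * of_int (- (s div int p + int t))"
      unfolding e \<theta>1_def using ph by (simp add: pi_eq algebra_simps)
    thus ?thesis unfolding c_def by (simp only: cos_shift_int)
  qed
  have inj: "inj_on \<pi>' T"
  proof (rule inj_onI)
    fix a b assume ab: "a \<in> T" "b \<in> T" "\<pi>' a = \<pi>' b"
    hence "[a + \<sigma> = b + \<sigma>] (mod p)" unfolding \<pi>'_def cong_def by simp
    hence "[a = b] (mod p)" by (simp add: cong_add_rcancel_nat)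
    thus "a = b" using cong_less_modulus_unique_nat[of a b p] ab T by auto
  qed
  define T' where "T' = \<pi>' ` T"
  have T'sub: "T' \<subseteq> {..<p}" unfolding T'_def \<pi>'_def using p by auto
  have cardT': "card T' = r" unfolding T'_def r_def using inj by (simp add: card_image)
  have z2: "cmod z = (\<Sum>k\<in>T'. c k)"
    unfolding z1 T'_def by (simp add: cshift sum.reindex[OF inj])
  define lam where "lam = cos (real r * h / 2)"
  have low: "c k \<ge> lam" if "k < r" for k
  proof -
    have k1: "real k + 1 \<le> real r" using that by simp
    have "(real k + 1) * h \<le> real r * h" using mult_right_mono[OF k1, of h] hpos by simp
    hence a1: "real k * h - \<theta>1 \<le> real r * h / 2" using th1a by (simp add: algebra_simps)
    have a2: "- (real r * h / 2) \<le> real k * h - \<theta>1"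
      using th1b mult_nonneg_nonneg[of "real k" h] hpos by linarith
    have "\<bar>real k * h - \<theta>1\<bar> \<le> real r * h / 2" using a1 a2 by linarith
    hence "cos (real r * h / 2) \<le> cos \<bar>real k * h - \<theta>1\<bar>"
      using rhpi by (intro cos_monotone_0_pi_le) auto
    thus ?thesis unfolding c_def lam_def by simp
  qed
  have high: "c k \<le> lam" if "r \<le> k" "k < p" for k
  proof -
    have k1: "real r \<le> real k" using that by simp
    have k2: "real k + 1 \<le> real p" using that by simp
    have m1: "real r * h \<le> real k * h" using mult_right_mono[OF k1, of h] hpos by simp
    have m2: "(real k + 1) * h \<le> real p * h" using mult_right_mono[OF k2, of h] hpos by simp
    have a1: "real r * h / 2 \<le> real k * h - \<theta>1" using m1 th1b by simp
    have a2: "real k * h - \<theta>1 \<le> 2 * pi - real r * h / 2" using m2 th1a ph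
      by (simp add: algebra_simps)
    show ?thesis
    proof (cases "real k * h - \<theta>1 \<le> pi")
      case True
      have "cos (real k * h - \<theta>1) \<le> cos (real r * h / 2)"
        using True a1 hpos by (intro cos_monotone_0_pi_le) auto
      thus ?thesis unfolding c_def lam_def .
    next
      case False
      have "cos (2 * pi - (real k * h - \<theta>1)) \<le> cos (real r * h / 2)"
        using False a2 hpos by (intro cos_monotone_0_pi_le) auto
      thus ?thesis unfolding c_def lam_def by simp
    qed
  qed
  have fin: "finite T'" using T'sub finite_subset by blast
  have "(\<Sum>k\<in>T'. c k) = (\<Sum>k\<in>T' \<inter> {..<r}. c k) + (\<Sum>k\<in>T' - {..<r}. c k)"
    using fin by (metis Diff_Int sum.Int_Diff)
  also have "(\<Sum>k\<in>T' - {..<r}. c k) \<le> (\<Sum>k\<in>T' - {..<r}. lam)"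
    using T'sub by (intro sum_mono high) auto
  also have "(\<Sum>k\<in>T' - {..<r}. lam) = real (card (T' - {..<r})) * lam" by simp
  also have "card (T' - {..<r}) = card ({..<r} - T')"
    using fin cardT' by (simp add: card_Diff_subset_Int Int_commute)
  also have "real (card ({..<r} - T')) * lam = (\<Sum>k\<in>{..<r} - T'. lam)" by simp
  also have "(\<Sum>k\<in>{..<r} - T'. lam) \<le> (\<Sum>k\<in>{..<r} - T'. c k)"
    by (intro sum_mono low) auto
  also have "(\<Sum>k\<in>T' \<inter> {..<r}. c k) + (\<Sum>k\<in>{..<r} - T'. c k) = (\<Sum>k<r. c k)"
    by (metis Int_commute add.commute finite_lessThan sum.Int_Diff)
  finally have z3: "cmod z \<le> (\<Sum>k<r. c k)" using z2 by linarith
  have "(\<Sum>k<r. c k) = Re (cis (- \<theta>1) * (\<Sum>k<r. cis (real k * h)))"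
    by (simp add: c_def sum_distrib_left cis_mult Re_sum)
  also have "\<dots> \<le> cmod (cis (- \<theta>1) * (\<Sum>k<r. cis (real k * h)))" by (rule complex_Re_le_cmod)
  also have "\<dots> = cmod (\<Sum>k<r. cis (real k * h))" by (simp add: norm_mult)
  also have "\<dots> = sin (pi * real r / real p) / sin (pi / real p)"
    unfolding h_def by (rule arc_bound[OF p rp])
  finally show ?thesis using z3 zeq unfolding r_def by simp
qed


lemma jensen_sin:
  fixes y :: "'b \<Rightarrow> real"
  assumes "finite S" "S \<noteq> {}" "\<And>i. i \<in> S \<Longrightarrow> y i \<in> {0..pi}"
  shows "(\<Sum>i\<in>S. sin (y i)) \<le> real (card S) * sin ((\<Sum>i\<in>S. y i) / real (card S))"
proof -
  have conv: "convex_on {0..pi} (\<lambda>x. - sin x)"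
  proof (rule convex_on_realI[where f' = "\<lambda>x. - cos x"])
    show "connected {0..pi}" by simp
    show "((\<lambda>x. - sin x) has_real_derivative - cos x) (at x)" for x
      by (auto intro!: derivative_eq_intros)
    show "- cos x \<le> - cos y" if "x \<in> {0..pi}" "y \<in> {0..pi}" "x \<le> y" for x y
      using that cos_monotone_0_pi_le[of x y] by auto
  qed
  define n where "n = real (card S)"
  have npos: "n > 0" using assms unfolding n_def by (simp add: card_gt_0_iff)
  have "- sin (\<Sum>i\<in>S. (1/n) *\<^sub>R y i) \<le> (\<Sum>i\<in>S. (1/n) * - sin (y i))"
    using assms npos by (intro convex_on_sum[OF assms(1,2) conv]) (auto simp: n_def)
  hence "(\<Sum>i\<in>S. sin (y i)) / n \<le> sin ((\<Sum>i\<in>S. y i) / n)"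
    by (simp add: sum_distrib_left[symmetric] sum_divide_distrib[symmetric] sum_negf)
  thus ?thesis using npos unfolding n_def[symmetric] by (simp add: field_simps)
qed

lemma group_sum:
  fixes f :: "nat \<Rightarrow> 'b::comm_semiring_1"
  assumes "finite A" "\<And>x. x \<in> A \<Longrightarrow> t x < p"
  shows "(\<Sum>x\<in>A. f (t x)) = (\<Sum>j<p. of_nat (card {x\<in>A. t x = j}) * f j)"
proof -
  have "(\<Sum>x\<in>A. f (t x)) = (\<Sum>x\<in>A. \<Sum>j<p. if t x = j then f j else 0)"
    using assms(2) by (intro sum.cong) (auto simp: sum.delta)
  also have "\<dots> = (\<Sum>j<p. \<Sum>x\<in>A. if t x = j then f j else 0)" by (rule sum.swap)
  also have "\<dots> = (\<Sum>j<p. of_nat (card {x\<in>A. t x = j}) * f j)"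
    using assms(1) by (intro sum.cong) (auto simp: sum.inter_filter[symmetric])
  finally show ?thesis .
qed

lemma layer_count:
  assumes "n \<le> M"
  shows "(\<Sum>l=1..M. (if l \<le> n then 1 else 0 :: 'b::comm_semiring_1)) = of_nat n"
proof -
  have "(\<Sum>l=1..M. (if l \<le> n then 1 else 0 :: 'b)) = (\<Sum>l\<in>{1..n}. 1)"
    by (rule sum.mono_neutral_cong_right) (use assms in auto)
  thus ?thesis by simp
qed


lemma layer:
  fixes t :: "'a \<Rightarrow> nat"
  assumes p: "p \<ge> 2" and fin: "finite A" and tp: "\<And>x. x \<in> A \<Longrightarrow> t x < p"
    and fib: "\<And>j. card {x\<in>A. t x = j} \<le> M"
  shows "\<exists>r. (\<forall>l. r l \<le> p) \<and> (\<Sum>l=1..M. r l) = card A \<and>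
     cmod (\<Sum>x\<in>A. omega p ^ t x) \<le> (\<Sum>l=1..M. sin (pi * real (r l) / real p) / sin (pi / real p))"
proof -
  define n where "n j = card {x\<in>A. t x = j}" for j
  define T where "T l = {j\<in>{..<p}. l \<le> n j}" for l
  define r where "r l = card (T l)" for l
  have Tsub: "T l \<subseteq> {..<p}" for l unfolding T_def by auto
  have rp: "\<forall>l. r l \<le> p" unfolding r_def using Tsub by (metis card_lessThan card_mono finite_lessThan)
  have nM: "n j \<le> M" for j unfolding n_def by (rule fib)
  have "(\<Sum>x\<in>A. omega p ^ t x) = (\<Sum>j<p. of_nat (n j) * omega p ^ j)"
    unfolding n_def by (rule group_sum[OF fin tp])
  also have "\<dots> = (\<Sum>j<p. \<Sum>l=1..M. (if l \<le> n j then omega p ^ j else 0))"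
  proof (rule sum.cong)
    fix j
    have "of_nat (n j) * omega p ^ j = (\<Sum>l=1..M. (if l \<le> n j then 1 else 0)) * omega p ^ j"
      by (simp only: layer_count[OF nM])
    also have "\<dots> = (\<Sum>l=1..M. (if l \<le> n j then omega p ^ j else 0))"
      by (simp add: sum_distrib_right) (rule sum.cong, auto)
    finally show "of_nat (n j) * omega p ^ j = (\<Sum>l=1..M. (if l \<le> n j then omega p ^ j else 0))" .
  qed simp
  also have "\<dots> = (\<Sum>l=1..M. \<Sum>j<p. (if l \<le> n j then omega p ^ j else 0))" by (rule sum.swap)
  also have "\<dots> = (\<Sum>l=1..M. \<Sum>j\<in>T l. omega p ^ j)"
  proof (rule sum.cong[OF refl])
    fix l show "(\<Sum>j<p. (if l \<le> n j then omega p ^ j else 0)) = (\<Sum>j\<in>T l. omega p ^ j)"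
      unfolding T_def by (rule sum.inter_filter[symmetric]) simp
  qed
  finally have eq: "(\<Sum>x\<in>A. omega p ^ t x) = (\<Sum>l=1..M. \<Sum>j\<in>T l. omega p ^ j)" .
  have "cmod (\<Sum>x\<in>A. omega p ^ t x) \<le> (\<Sum>l=1..M. cmod (\<Sum>j\<in>T l. omega p ^ j))"
    unfolding eq by (rule norm_sum)
  also have "\<dots> \<le> (\<Sum>l=1..M. sin (pi * real (r l) / real p) / sin (pi / real p))"
    unfolding r_def by (intro sum_mono subset_bound[OF p Tsub])
  finally have bound: "cmod (\<Sum>x\<in>A. omega p ^ t x) \<le> (\<Sum>l=1..M. sin (pi * real (r l) / real p) / sin (pi / real p))" .
  have "(\<Sum>l=1..M. r l) = (\<Sum>l=1..M. \<Sum>j<p. (if l \<le> n j then 1 else 0::nat))"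
  proof (rule sum.cong[OF refl])
    fix l show "r l = (\<Sum>j<p. (if l \<le> n j then 1 else 0::nat))"
      unfolding r_def T_def card_eq_sum by (rule sum.inter_filter) simp
  qed
  also have "\<dots> = (\<Sum>j<p. \<Sum>l=1..M. (if l \<le> n j then 1 else 0::nat))" by (rule sum.swap)
  also have "\<dots> = (\<Sum>j<p. n j)" by (simp only: layer_count[OF nM] of_nat_id)
  also have "\<dots> = (\<Sum>x\<in>A. (1::nat))"
    using group_sum[OF fin tp, where f="\<lambda>_. 1::nat"] unfolding n_def by simp
  also have "\<dots> = card A" by simp
  finally show ?thesis using rp bound by blast
qed


theorem lemma4p5:
  fixes p w m :: nat and \<mu> :: real and A :: "nat \<Rightarrow> ('a::{field,finite}) set"
  assumes "prime p" and "w \<ge> 1" and "CARD('a) = p ^ w"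
    and "\<mu> > 0" and "2 powr \<mu> = real m"
    and "(\<Sum>i=1..m. card (A i)) = p ^ w"
  shows "(\<Sum>i=1..m. Max ((\<lambda>\<alpha>. cmod (fourier p w (indicator_fn (A i)) \<alpha>)) ` (UNIV - {0})))
           \<le> (real m * sin (pi / real m)) / (real p * sin (pi / real p))"
proof -
  interpret F: ff p w "TYPE('a)" by unfold_locales (use assms in auto)
  define N where "N = p ^ w"
  define M where "M = p ^ (w - 1)"
  have p2: "p \<ge> 2" by (rule F.p2)
  have NM: "N = p * M" unfolding N_def M_def using assms(2)
    by (metis Suc_diff_1 less_le_trans zero_less_one power_Suc)
  have Mpos: "M > 0" unfolding M_def using p2 by simp
  have "1 < 2 powr \<mu>" using assms(4) by (intro gr_one_powr) auto
  hence m1: "m \<ge> 1" using assms(5) by simp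
  have sinp: "sin (pi / real p) > 0" using p2 by (intro sin_gt_zero) (auto simp: field_simps)
  have Npos: "real N > 0" unfolding N_def using p2 by simp
  have mono: "\<And>x y. x \<le> y \<Longrightarrow> x / (real N * sin (pi / real p)) \<le> y / (real N * sin (pi / real p))"
    using Npos sinp by (simp add: divide_right_mono)
  define f where "f i a = cmod (fourier p w (indicator_fn (A i)) a)" for i a
  have "\<forall>i. \<exists>a. a \<noteq> (0::'a) \<and> Max (f i ` (UNIV - {0})) = f i a"
  proof
    fix i
    have "Max (f i ` (UNIV - {0})) \<in> f i ` (UNIV - {0::'a})"
    proof (rule Max_in)
      have "(1::'a) \<in> UNIV - {0}" by simp
      thus "f i ` (UNIV - {0::'a}) \<noteq> {}" by blast
    qed simp
    thus "\<exists>a. a \<noteq> (0::'a) \<and> Max (f i ` (UNIV - {0})) = f i a" by auto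
  qed
  then obtain \<alpha> where \<alpha>: "\<And>i. \<alpha> i \<noteq> 0" "\<And>i. Max (f i ` (UNIV - {0})) = f i (\<alpha> i)" by metis
  have four: "fourier p w (indicator_fn B) a = (1 / of_nat N) * (\<Sum>x\<in>B. omega p ^ trace_nat p w (a * x))"
    for B :: "'a set" and a
  proof -
    have "(\<Sum>x\<in>UNIV. indicator_fn B x * omega p ^ trace_nat p w (a * x))
        = (\<Sum>x\<in>UNIV. if x \<in> B then omega p ^ trace_nat p w (a * x) else 0)"
      by (rule sum.cong) (auto simp: indicator_fn_def)
    also have "\<dots> = (\<Sum>x\<in>{x\<in>UNIV. x \<in> B}. omega p ^ trace_nat p w (a * x))"
      by (rule sum.inter_filter[symmetric]) simp
    finally show ?thesis unfolding fourier_def N_def by simp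
  qed
  have "\<forall>i\<in>{1..m}. \<exists>r. (\<forall>l. r l \<le> p) \<and> (\<Sum>l=1..M. r l) = card (A i) \<and>
     cmod (\<Sum>x\<in>A i. omega p ^ trace_nat p w (\<alpha> i * x)) \<le> (\<Sum>l=1..M. sin (pi * real (r l) / real p) / sin (pi / real p))"
  proof
    fix i
    show "\<exists>r. (\<forall>l. r l \<le> p) \<and> (\<Sum>l=1..M. r l) = card (A i) \<and>
     cmod (\<Sum>x\<in>A i. omega p ^ trace_nat p w (\<alpha> i * x)) \<le> (\<Sum>l=1..M. sin (pi * real (r l) / real p) / sin (pi / real p))"
    proof (rule layer[OF p2])
      show "finite (A i)" by simp
      show "trace_nat p w (\<alpha> i * x) < p" for x using F.trace_nat_props by blast
      show "card {x \<in> A i. trace_nat p w (\<alpha> i * x) = j} \<le> M" for j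
      proof -
        have "card {x \<in> A i. trace_nat p w (\<alpha> i * x) = j} \<le> card {x. trace_nat p w (\<alpha> i * x) = j}"
          by (intro card_mono) auto
        thus ?thesis using F.fiber_card[OF \<alpha>(1)[of i], of j] unfolding M_def by linarith
      qed
    qed
  qed
  then obtain R where R: "\<And>i. i \<in> {1..m} \<Longrightarrow> (\<forall>l. R i l \<le> p) \<and> (\<Sum>l=1..M. R i l) = card (A i) \<and>
     cmod (\<Sum>x\<in>A i. omega p ^ trace_nat p w (\<alpha> i * x)) \<le> (\<Sum>l=1..M. sin (pi * real (R i l) / real p) / sin (pi / real p))"
    by metis
  define S where "S = {1..m} \<times> {1..M}"
  define y where "y = (\<lambda>(i,l). pi * real (R i l) / real p)"
  have "(\<Sum>i=1..m. Max ((\<lambda>\<alpha>. cmod (fourier p w (indicator_fn (A i)) \<alpha>)) ` (UNIV - {0})))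
      = (\<Sum>i=1..m. (1 / real N) * cmod (\<Sum>x\<in>A i. omega p ^ trace_nat p w (\<alpha> i * x)))"
    using \<alpha>(2) unfolding f_def by (simp add: four norm_mult norm_divide)
  also have "\<dots> \<le> (\<Sum>i=1..m. (1 / real N) * (\<Sum>l=1..M. sin (pi * real (R i l) / real p) / sin (pi / real p)))"
    using R by (intro sum_mono mult_left_mono) auto
  also have "\<dots> = (1 / (real N * sin (pi / real p))) * (\<Sum>i=1..m. \<Sum>l=1..M. sin (y (i, l)))"
    by (simp add: y_def sum_distrib_left sum_divide_distrib)
  also have "(\<Sum>i=1..m. \<Sum>l=1..M. sin (y (i, l))) = (\<Sum>z\<in>S. sin (y z))"
    unfolding S_def by (simp add: sum.cartesian_product split_def)
  finally have ineqA: "(\<Sum>i=1..m. Max ((\<lambda>\<alpha>. cmod (fourier p w (indicator_fn (A i)) \<alpha>)) ` (UNIV - {0})))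
     \<le> 1 / (real N * sin (pi / real p)) * (\<Sum>z\<in>S. sin (y z))" .
  have ineqB: "(\<Sum>z\<in>S. sin (y z)) \<le> real (card S) * sin ((\<Sum>z\<in>S. y z) / real (card S))"
  proof (rule jensen_sin)
    show "finite S" unfolding S_def by simp
    show "S \<noteq> {}" unfolding S_def using m1 Mpos by auto
    fix z assume "z \<in> S"
    then obtain i l where z: "z = (i, l)" "i \<in> {1..m}" unfolding S_def by auto
    have "R i l \<le> p" using R[OF z(2)] by blast
    hence "real (R i l) / real p \<le> 1" using p2 by simp
    hence "pi * (real (R i l) / real p) \<le> pi * 1" by (intro mult_left_mono) auto
    thus "y z \<in> {0..pi}" unfolding y_def z by auto
  qed
  have sy: "(\<Sum>z\<in>S. y z) = pi / real p * (\<Sum>i=1..m. real (\<Sum>l=1..M. R i l))"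
    unfolding S_def y_def by (simp add: sum.cartesian_product[symmetric] sum_distrib_left sum_divide_distrib)
  also have "(\<Sum>i=1..m. real (\<Sum>l=1..M. R i l)) = real N"
  proof -
    have "(\<Sum>i=1..m. real (\<Sum>l=1..M. R i l)) = (\<Sum>i=1..m. real (card (A i)))"
      using R by (intro sum.cong) auto
    also have "\<dots> = real N" unfolding N_def using assms(6) by (metis of_nat_sum)
    finally show ?thesis .
  qed
  finally have sy2: "(\<Sum>z\<in>S. y z) = pi / real p * real N" .
  have cS: "card S = m * M" unfolding S_def by simp
  have ineq: "(\<Sum>i=1..m. Max ((\<lambda>\<alpha>. cmod (fourier p w (indicator_fn (A i)) \<alpha>)) ` (UNIV - {0})))
     \<le> 1 / (real N * sin (pi / real p)) * (real (m * M) * sin (pi / real p * real N / real (m * M)))"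
  proof -
    have "1 / (real N * sin (pi / real p)) * (\<Sum>z\<in>S. sin (y z))
       \<le> 1 / (real N * sin (pi / real p)) * (real (m * M) * sin (pi / real p * real N / real (m * M)))"
      using ineqB unfolding sy2 cS using Npos sinp by (intro mult_left_mono) auto
    thus ?thesis using ineqA by linarith
  qed
  have "pi / real p * real N / real (m * M) = pi / real m"
    using NM Mpos p2 m1 by (simp add: field_simps)
  moreover have "1 / (real N * sin (pi / real p)) * (real (m * M) * sin (pi / real m))
      = (real m * sin (pi / real m)) / (real p * sin (pi / real p))"
    using NM Mpos p2 sinp by (simp add: field_simps)
  ultimately show ?thesis using ineq by simp
qed

end
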